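(* Let $P=(N,L)$ be a filtration pair for $f$ (for some isolated invariant set), let $N_L=N/L$ be the quotient space in which $L$ is collapsed to a point $[L]$ taken as base point (if $L=\emptyset$, $N_L$ is the disjoint union of $N$ and a single point $[L]$), and let $p:N\to N_L$ be the quotient map. Then the map $f_P:N_L\to N_L$ given by $f_P([L])=[L]$ and $f_P(p(x))=p(f(x))$ for $x\in N\setminus L$ is a well-defined continuous base-point preserving map, and $[L]\in\operatorname{Int} f_P^{-1}([L])$.
   Context: Let $X$ be a locally compact metric space, $U\subset X$ open and $f:U\to X$ continuous. For $N\subset U$, a solution through $x$ is a map $\sigma:\mathbb Z\to U$ with $\sigma(0)=x$ and $f(\sigma(n))=\sigma(n+1)$ for all $n$; $\operatorname{Inv} N$ is the set of $x\in N$ admitting a solution through $x$ with all values in $N$. A compact set $N\subset U$ is an isolating neighborhood if $\operatorname{Inv} N\subset\operatorname{Int} N$; a set $S$ is an isolated invariant set if $S=\operatorname{Inv} N$ for some isolating neighborhood $N$. The exit set of $N$ is $N^-=\{x\in N: f(x)\notin\operatorname{Int} N\}$. A filtration pair for an isolated invariant set $S$ is a pair of compact sets $L\subset N$ contained in the interior of the domain of $f$, each equal to the closure of its interior, such that (1) $\operatorname{cl}(N\setminus L)$ is an isolating neighborhood with $\operatorname{Inv}\operatorname{cl}(N\setminus L)=S$; (2) $L$ is a neighborhood of $N^-$ in $N$; (3) $f(L)\cap\operatorname{cl}(N\setminus L)=\emptyset$. *)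

theory Defs
  imports "HOL-Analysis.Analysis"
begin

definition is_solution :: "('a \<Rightarrow> 'a) \<Rightarrow> 'a set \<Rightarrow> (int \<Rightarrow> 'a) \<Rightarrow> 'a \<Rightarrow> bool" where
  "is_solution f U \<sigma> x \<longleftrightarrow> \<sigma> 0 = x \<and> (\<forall>n. \<sigma> n \<in> U \<and> f (\<sigma> n) = \<sigma> (n + 1))"

definition Inv :: "('a \<Rightarrow> 'a) \<Rightarrow> 'a set \<Rightarrow> 'a set \<Rightarrow> 'a set" where
  "Inv f U N = {x \<in> N. \<exists>\<sigma>. is_solution f U \<sigma> x \<and> (\<forall>n. \<sigma> n \<in> N)}"

definition isolating_nbhd :: "('a::metric_space \<Rightarrow> 'a) \<Rightarrow> 'a set \<Rightarrow> 'a set \<Rightarrow> bool" where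
  "isolating_nbhd f U N \<longleftrightarrow> compact N \<and> N \<subseteq> U \<and> Inv f U N \<subseteq> interior N"

definition isolated_invariant_set :: "('a::metric_space \<Rightarrow> 'a) \<Rightarrow> 'a set \<Rightarrow> 'a set \<Rightarrow> bool" where
  "isolated_invariant_set f U S \<longleftrightarrow> (\<exists>N. isolating_nbhd f U N \<and> S = Inv f U N)"

definition exit_set :: "('a::metric_space \<Rightarrow> 'a) \<Rightarrow> 'a set \<Rightarrow> 'a set" where
  "exit_set f N = {x \<in> N. f x \<notin> interior N}"

definition filtration_pair ::
  "('a::metric_space \<Rightarrow> 'a) \<Rightarrow> 'a set \<Rightarrow> 'a set \<Rightarrow> 'a set \<Rightarrow> 'a set \<Rightarrow> bool" where
  "filtration_pair f U S N L \<longleftrightarrow>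
     compact L \<and> compact N \<and> L \<subseteq> N \<and> N \<subseteq> interior U \<and>
     closure (interior N) = N \<and> closure (interior L) = L \<and>
     isolating_nbhd f U (closure (N - L)) \<and> Inv f U (closure (N - L)) = S \<and>
     (\<exists>V. openin (top_of_set N) V \<and> exit_set f N \<subseteq> V \<and> V \<subseteq> L) \<and>
     f ` L \<inter> closure (N - L) = {}"

text \<open>The pointed quotient space N/L. Its points are represented in 'a option:
  None is the base point [L], and Some x is the class of x \<in> N - L.
  (If L is empty, None is an extra isolated point.)\<close>

definition quot_proj :: "'a set \<Rightarrow> 'a \<Rightarrow> 'a option" where
  "quot_proj L x = (if x \<in> L then None else Some x)"

definition quot_carrier :: "'a set \<Rightarrow> 'a set \<Rightarrow> 'a option set" where
  "quot_carrier N L = insert None (Some ` (N - L))"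

definition quot_space :: "'a::topological_space set \<Rightarrow> 'a set \<Rightarrow> 'a option topology" where
  "quot_space N L = topology (\<lambda>V. V \<subseteq> quot_carrier N L \<and>
      openin (top_of_set N) {x \<in> N. quot_proj L x \<in> V})"

definition index_map :: "('a \<Rightarrow> 'a) \<Rightarrow> 'a set \<Rightarrow> 'a option \<Rightarrow> 'a option" where
  "index_map f L y = (case y of None \<Rightarrow> None | Some x \<Rightarrow> quot_proj L (f x))"

end

theory Submission
  imports Defs
begin

lemma quot_open_iff:
  "openin (quot_space N L) V \<longleftrightarrow> V \<subseteq> quot_carrier N L \<and>
      openin (top_of_set N) {x \<in> N. quot_proj L x \<in> V}"
proof -
  have "istopology (\<lambda>V. V \<subseteq> quot_carrier N L \<and>
      openin (top_of_set N) {x \<in> N. quot_proj L x \<in> V})"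
    unfolding istopology_def
  proof (rule conjI; intro allI impI)
    fix S T assume a: "S \<subseteq> quot_carrier N L \<and> openin (top_of_set N) {x \<in> N. quot_proj L x \<in> S}"
      "T \<subseteq> quot_carrier N L \<and> openin (top_of_set N) {x \<in> N. quot_proj L x \<in> T}"
    have "{x \<in> N. quot_proj L x \<in> S \<inter> T} = {x \<in> N. quot_proj L x \<in> S} \<inter> {x \<in> N. quot_proj L x \<in> T}" by auto
    moreover have "openin (top_of_set N) ({x \<in> N. quot_proj L x \<in> S} \<inter> {x \<in> N. quot_proj L x \<in> T})"
      using a by (intro openin_Int) auto
    ultimately show "S \<inter> T \<subseteq> quot_carrier N L \<and> openin (top_of_set N) {x \<in> N. quot_proj L x \<in> S \<inter> T}"
      using a by (metis (no_types, lifting) le_infI1)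
  next
    fix K assume a: "\<forall>V\<in>K. V \<subseteq> quot_carrier N L \<and> openin (top_of_set N) {x \<in> N. quot_proj L x \<in> V}"
    have "{x \<in> N. quot_proj L x \<in> \<Union>K} = \<Union>((\<lambda>V. {x \<in> N. quot_proj L x \<in> V}) ` K)" by auto
    then show "\<Union>K \<subseteq> quot_carrier N L \<and> openin (top_of_set N) {x \<in> N. quot_proj L x \<in> \<Union>K}"
      using a by auto
  qed
  then show ?thesis unfolding quot_space_def by (simp add: topology_inverse')
qed

lemma quot_topspace: "topspace (quot_space N L) = quot_carrier N L"
proof -
  have "openin (quot_space N L) (quot_carrier N L)"
    unfolding quot_open_iff
  proof -
    have "{x \<in> N. quot_proj L x \<in> quot_carrier N L} = N"
      by (auto simp: quot_proj_def quot_carrier_def)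
    then show "quot_carrier N L \<subseteq> quot_carrier N L \<and> openin (top_of_set N) {x \<in> N. quot_proj L x \<in> quot_carrier N L}"
      by simp
  qed
  then have "quot_carrier N L \<subseteq> topspace (quot_space N L)" by (rule openin_subset)
  moreover have "topspace (quot_space N L) \<subseteq> quot_carrier N L"
    using quot_open_iff[of N L "topspace (quot_space N L)"] by auto
  ultimately show ?thesis by auto
qed

theorem mainTheorem4:
  fixes f :: "'a::metric_space \<Rightarrow> 'a" and U S N L :: "'a set"
  assumes "locally compact (UNIV :: 'a set)"
    and "open U" and "continuous_on U f"
    and "filtration_pair f U S N L"
  shows "f ` (N - L) \<subseteq> N
    \<and> topspace (quot_space N L) = quot_carrier N L
    \<and> (\<forall>x\<in>N - L. index_map f L (quot_proj L x) = quot_proj L (f x))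
    \<and> index_map f L None = None
    \<and> continuous_map (quot_space N L) (quot_space N L) (index_map f L)
    \<and> None \<in> (quot_space N L) interior_of {y \<in> topspace (quot_space N L). index_map f L y = None}"
proof -
  define C where "C = closure (N - L)"
  define g where "g = index_map f L"
  define p where "p = quot_proj L"
  have fp: "compact L" "compact N" "L \<subseteq> N" "N \<subseteq> interior U"
     "f ` L \<inter> C = {}"
    using assms(4) unfolding filtration_pair_def C_def by auto
  obtain V0 where V0: "exit_set f N \<subseteq> V0" "V0 \<subseteq> L"
    using assms(4) unfolding filtration_pair_def by auto
  have NC: "N - L \<subseteq> C" unfolding C_def by (rule closure_subset)
  have fint: "f x \<in> interior N" if "x \<in> N - L" for x
    using that V0 unfolding exit_set_def by auto
  have fL: "f x \<notin> C" if "x \<in> L" for x using that fp(5) by auto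
  have contN: "continuous_on N f"
    using assms(3) fp(4) interior_subset continuous_on_subset by blast
  have img: "f ` (N - L) \<subseteq> N" using fint interior_subset by blast
  have gp: "g (p x) = (if x \<in> L then None else p (f x))" for x
    by (simp add: g_def p_def index_map_def quot_proj_def)
  have preopen: "openin (top_of_set N) {x \<in> N. f x \<in> G}" if "open G" for G
  proof -
    have "{x \<in> N. f x \<in> G} = N \<inter> f -` G" by auto
    then show ?thesis using continuous_openin_preimage_gen[OF contN that] by simp
  qed
  have cont: "continuous_map (quot_space N L) (quot_space N L) g"
    unfolding continuous_map_def
  proof (intro conjI allI impI)
    show "g \<in> topspace (quot_space N L) \<rightarrow> topspace (quot_space N L)"
      unfolding quot_topspace
    proof
      fix y assume "y \<in> quot_carrier N L"
      then consider "y = None" | x where "x \<in> N - L" "y = Some x"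
        unfolding quot_carrier_def by auto
      then show "g y \<in> quot_carrier N L"
      proof cases
        case 1 then show ?thesis by (simp add: g_def index_map_def quot_carrier_def)
      next
        case 2
        then have "f x \<in> N" using img by auto
        then show ?thesis using 2
          by (auto simp: g_def index_map_def quot_carrier_def quot_proj_def)
      qed
    qed
  next
    fix V assume "openin (quot_space N L) V"
    then have Vc: "V \<subseteq> quot_carrier N L" and W: "openin (top_of_set N) {x \<in> N. p x \<in> V}"
      unfolding quot_open_iff p_def by auto
    obtain Op where O: "open Op" "{x \<in> N. p x \<in> V} = N \<inter> Op"
      using W by (auto simp: openin_open)
    define G where "G = (interior N \<inter> Op) \<union> (if None \<in> V then - C else {})"
    have oG: "open G" unfolding G_def using O(1) by (auto simp: C_def)
    have eq: "{x \<in> N. p x \<in> {y \<in> topspace (quot_space N L). g y \<in> V}} = {x \<in> N. f x \<in> G}"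
    proof (intro set_eqI iffI)
      fix x assume "x \<in> {x \<in> N. p x \<in> {y \<in> topspace (quot_space N L). g y \<in> V}}"
      then have x: "x \<in> N" "g (p x) \<in> V" by auto
      show "x \<in> {x \<in> N. f x \<in> G}"
      proof (cases "x \<in> L")
        case True
        then have "None \<in> V" using x gp by auto
        then show ?thesis using fL True x unfolding G_def by auto
      next
        case False
        then have "p (f x) \<in> V" "f x \<in> N" using x gp img by auto
        then have "f x \<in> Op" using O(2) by auto
        then show ?thesis using fint False x unfolding G_def by auto
      qed
    next
      fix x assume "x \<in> {x \<in> N. f x \<in> G}"
      then have x: "x \<in> N" "f x \<in> G" by auto
      have pc: "p x \<in> topspace (quot_space N L)" using x
        by (auto simp: quot_topspace quot_carrier_def p_def quot_proj_def)
      have "g (p x) \<in> V"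
      proof (cases "x \<in> L")
        case True
        have "None \<in> V"
        proof (cases "None \<in> V")
          case False
          then have "f x \<in> N \<inter> Op" using x(2) interior_subset unfolding G_def by auto
          then have "p (f x) \<in> V" using O(2) by auto
          moreover have "f x \<in> L" using \<open>f x \<in> N \<inter> Op\<close> fL[OF True] NC by auto
          ultimately show ?thesis by (simp add: p_def quot_proj_def)
        qed
        then show ?thesis using True gp by simp
      next
        case False
        then have fN: "f x \<in> interior N" "f x \<in> N" using fint x(1) interior_subset by auto
        show ?thesis
        proof (cases "f x \<in> Op")
          case True
          then have "p (f x) \<in> V" using O(2) fN by auto
          then show ?thesis using False gp by simp
        next
          case c: False
          then have "None \<in> V" "f x \<notin> C" using x(2) fN unfolding G_def by (auto split: if_splits)
          then have "f x \<in> L" using NC fN by auto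
          then have "p (f x) = None" by (simp add: p_def quot_proj_def)
          then show ?thesis using False gp[of x] \<open>None \<in> V\<close> by simp
        qed
      qed
      then show "x \<in> {x \<in> N. p x \<in> {y \<in> topspace (quot_space N L). g y \<in> V}}"
        using pc x by auto
    qed
    have sub: "{y \<in> topspace (quot_space N L). g y \<in> V} \<subseteq> quot_carrier N L"
      by (auto simp: quot_topspace)
    show "openin (quot_space N L) {x \<in> topspace (quot_space N L). g x \<in> V}"
      unfolding quot_open_iff using sub eq preopen[OF oG] by (simp add: p_def)
  qed
  define T where "T = insert None (Some ` {x \<in> N - L. f x \<notin> C})"
  have Tpre: "{x \<in> N. p x \<in> T} = {x \<in> N. f x \<in> - C}"
    using fL by (auto simp: T_def p_def quot_proj_def)
  have oC: "open (- C)" unfolding C_def by (intro open_Compl closed_closure)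
  have Topen: "openin (quot_space N L) T"
    unfolding quot_open_iff using Tpre preopen[OF oC]
    by (auto simp: T_def quot_carrier_def p_def)
  have Tsub: "T \<subseteq> {y \<in> topspace (quot_space N L). g y = None}"
  proof
    fix y assume "y \<in> T"
    then consider "y = None" | x where "x \<in> N - L" "f x \<notin> C" "y = Some x"
      unfolding T_def by auto
    then show "y \<in> {y \<in> topspace (quot_space N L). g y = None}"
    proof cases
      case 1 then show ?thesis by (simp add: quot_topspace quot_carrier_def g_def index_map_def)
    next
      case 2
      then have "f x \<in> L" using img NC by auto
      then show ?thesis using 2
        by (auto simp: quot_topspace quot_carrier_def g_def index_map_def quot_proj_def)
    qed
  qed
  have int: "None \<in> (quot_space N L) interior_of {y \<in> topspace (quot_space N L). g y = None}"
    unfolding interior_of_def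
  proof (intro CollectI exI conjI)
    show "None \<in> T" by (simp add: T_def)
  qed (use Topen Tsub in auto)
  show ?thesis
    using img cont int
    by (simp add: quot_topspace g_def index_map_def quot_proj_def)
qed

end
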